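(* There exists an absolute constant $C>0$ such that the following holds. Let $n\ge1$, $0<q\le 1-\frac2n$ and $\pi\sim\mu_{n,q}$. Let $1\le m\le n$ and let $I=(i_1,\dots,i_m)\subseteq\{1,\dots,n\}$ be an increasing sequence of integers. Then $$\mathbb{P}\big(\pi(i_{k+1})>\pi(i_k)\text{ for all }1\le k\le m-1\big)\le\left(\frac{Cn(1-q)}{m}\right)^m.$$
   Context: For $q>0$ and $n\ge1$, $\mu_{n,q}(\pi)=q^{\mathrm{inv}(\pi)}/Z_{n,q}$ on $S_n$, with $\mathrm{inv}(\pi)$ the number of pairs $i<j$ with $\pi(i)>\pi(j)$ and $Z_{n,q}$ a normalizing constant. *)

theory Defs
  imports "HOL-Combinatorics.Permutations" Complex_Main
begin

definition perms :: "nat \<Rightarrow> (nat \<Rightarrow> nat) set" where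
  "perms n = {p. p permutes {1..n}}"

definition inv_count :: "nat \<Rightarrow> (nat \<Rightarrow> nat) \<Rightarrow> nat" where
  "inv_count n p = card {(i, j). i \<in> {1..n} \<and> j \<in> {1..n} \<and> i < j \<and> p i > p j}"

definition Z_mallows :: "nat \<Rightarrow> real \<Rightarrow> real" where
  "Z_mallows n q = (\<Sum>p\<in>perms n. q ^ inv_count n p)"

definition mallows :: "nat \<Rightarrow> real \<Rightarrow> (nat \<Rightarrow> nat) \<Rightarrow> real" where
  "mallows n q p = (if p \<in> perms n then q ^ inv_count n p / Z_mallows n q else 0)"

definition mallows_prob :: "nat \<Rightarrow> real \<Rightarrow> ((nat \<Rightarrow> nat) \<Rightarrow> bool) \<Rightarrow> real" where
  "mallows_prob n q A = (\<Sum>p\<in>{p \<in> perms n. A p}. mallows n q p)"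

end

theory Submission
  imports Defs
begin


definition cnt :: "(nat \<Rightarrow> nat) \<Rightarrow> nat \<Rightarrow> nat" where
  "cnt s j = card {i\<in>{1..<j}. s i > s j}"

lemma inv_sum: "inv_count n s = (\<Sum>j\<in>{1..n}. cnt s j)"
proof -
  have "{(i, j). i \<in> {1..n} \<and> j \<in> {1..n} \<and> i < j \<and> s i > s j}
      = (\<lambda>(j,i). (i,j)) ` (SIGMA j:{1..n}. {i\<in>{1..<j}. s i > s j})"
    by (auto simp: image_iff)
  moreover have "inj_on (\<lambda>(j,i). (i,j)) X" for X :: "(nat \<times> nat) set"
    by (auto simp: inj_on_def)
  ultimately have "inv_count n s = card (SIGMA j:{1..n}. {i\<in>{1..<j}. s i > s j})"
    unfolding inv_count_def by (simp add: card_image)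
  also have "\<dots> = (\<Sum>j\<in>{1..n}. cnt s j)"
    by (subst card_SigmaI) (auto simp: cnt_def)
  finally show ?thesis .
qed

lemma card_perm_filter:
  assumes tau: "\<tau> permutes A" and fin: "finite A"
  shows "card {i\<in>A. f (\<tau> i)} = card {i\<in>A. f i}"
proof -
  have "\<tau> ` {i\<in>A. f (\<tau> i)} = {i\<in>A. f i}"
  proof
    show "\<tau> ` {i\<in>A. f (\<tau> i)} \<subseteq> {i\<in>A. f i}"
      using tau by (auto simp: permutes_in_image)
    show "{i\<in>A. f i} \<subseteq> \<tau> ` {i\<in>A. f (\<tau> i)}"
    proof
      fix i assume i: "i \<in> {i\<in>A. f i}"
      have "inv \<tau> i \<in> A" using i tau by (simp add: permutes_in_image permutes_inv)
      moreover have "\<tau> (inv \<tau> i) = i" using tau permutes_inverses(1) by fastforce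
      ultimately show "i \<in> \<tau> ` {i\<in>A. f (\<tau> i)}" using i by (metis (mono_tags, lifting) image_eqI mem_Collect_eq)
    qed
  qed
  moreover have "inj \<tau>" using tau permutes_inj by blast
  ultimately show ?thesis by (metis card_image inj_on_subset subset_UNIV)
qed

lemma cnt_high:
  assumes tau: "\<tau> permutes P" and P: "P \<subseteq> {lo..hi}" and j: "hi < j" and lo: "1 \<le> lo"
  shows "cnt (p \<circ> \<tau>) j = cnt p j"
proof -
  have tj: "\<tau> j = j" using tau P j by (meson atLeastAtMost_iff not_le permutes_not_in subsetD)
  have tA: "\<tau> permutes {1..<j}"
  proof (rule permutes_subset[OF tau])
    show "P \<subseteq> {1..<j}" using P j lo by auto
  qed
  show ?thesis unfolding cnt_def using card_perm_filter[OF tA, of "\<lambda>x. p x > p j"] tj by simp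
qed

lemma cnt_low:
  assumes tau: "\<tau> permutes P" and P: "P \<subseteq> {lo..hi}" and j: "j < lo"
  shows "cnt (p \<circ> \<tau>) j = cnt p j"
proof -
  have "\<And>i. i \<le> j \<Longrightarrow> \<tau> i = i" using tau P j
    by (meson atLeastAtMost_iff le_less_trans not_le permutes_not_in subsetD)
  then have "{i\<in>{1..<j}. (p \<circ> \<tau>) i > (p \<circ> \<tau>) j} = {i\<in>{1..<j}. p i > p j}" by auto
  then show ?thesis unfolding cnt_def by simp
qed

lemma cnt_mid:
  assumes tau: "\<tau> permutes P" and P: "P \<subseteq> {lo..hi}" and j: "j \<notin> P" and fin: "finite P"
  shows "cnt (p \<circ> \<tau>) j \<le> cnt p j + card P"
proof -
  have tj: "\<tau> j = j" using tau j by (simp add: permutes_not_in)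
  have "{i\<in>{1..<j}. (p \<circ> \<tau>) i > (p \<circ> \<tau>) j} \<subseteq> {i\<in>{1..<j}. p i > p j} \<union> P"
    using tau tj by (auto simp: permutes_not_in)
  then have "cnt (p \<circ> \<tau>) j \<le> card ({i\<in>{1..<j}. p i > p j} \<union> P)"
    unfolding cnt_def by (intro card_mono) (auto simp: fin)
  also have "\<dots> \<le> cnt p j + card P" unfolding cnt_def by (rule card_Un_le)
  finally show ?thesis .
qed

definition gg :: "(nat \<Rightarrow> nat) \<Rightarrow> nat \<Rightarrow> nat \<Rightarrow> nat" where
  "gg p lo v = card {i\<in>{1..<lo}. p i > v}"

lemma cnt_inP:
  assumes tau: "\<tau> permutes P" and P: "P \<subseteq> {lo..hi}" and j: "j \<in> P"
  shows "cnt (p \<circ> \<tau>) j \<le> gg p lo ((p \<circ> \<tau>) j) + (hi + 1 - lo)"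
    and "gg p lo (p j) \<le> cnt p j"
proof -
  have jr: "lo \<le> j" "j \<le> hi" using P j by auto
  have "\<And>i. i < lo \<Longrightarrow> \<tau> i = i" using tau P
    by (meson atLeastAtMost_iff not_le permutes_not_in subsetD)
  then have "{i\<in>{1..<j}. (p \<circ> \<tau>) i > (p \<circ> \<tau>) j} \<subseteq> {i\<in>{1..<lo}. p i > (p \<circ> \<tau>) j} \<union> {lo..<j}"
    by auto
  then have "cnt (p \<circ> \<tau>) j \<le> card ({i\<in>{1..<lo}. p i > (p \<circ> \<tau>) j} \<union> {lo..<j})"
    unfolding cnt_def by (intro card_mono) auto
  also have "\<dots> \<le> gg p lo ((p \<circ> \<tau>) j) + card {lo..<j}" unfolding gg_def by (rule card_Un_le)
  also have "card {lo..<j} \<le> hi + 1 - lo" using jr by simp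
  finally show "cnt (p \<circ> \<tau>) j \<le> gg p lo ((p \<circ> \<tau>) j) + (hi + 1 - lo)" by simp
  show "gg p lo (p j) \<le> cnt p j" unfolding gg_def cnt_def
    using jr by (intro card_mono) auto
qed

lemma sum_if_const: "finite A \<Longrightarrow> (\<Sum>j\<in>A. if j \<in> X then c else 0) = card (A \<inter> X) * (c::nat)"
  by (simp add: sum.inter_restrict[symmetric])

lemma inv_bound:
  assumes tau: "\<tau> permutes P" and P: "P \<subseteq> {lo..hi}" and lo: "1 \<le> lo" and hi: "hi \<le> n"
  shows "inv_count n (p \<circ> \<tau>) \<le> inv_count n p + 2 * card P * (hi + 1 - lo)"
proof -
  define l where "l = hi + 1 - lo"
  define s where "s = p \<circ> \<tau>"
  define X where "X = {lo..hi} - P"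
  have fin: "finite P" using P finite_subset by blast
  have Pn: "P \<subseteq> {1..n}" using P lo hi by auto
  have pw: "cnt s j + (if j\<in>P then gg p lo (p j) else 0) \<le>
      cnt p j + (if j\<in>P then gg p lo (s j) + l else 0) + (if j \<in> X then card P else 0)"
    if "j \<in> {1..n}" for j
  proof (cases "j \<in> P")
    case True
    then show ?thesis using cnt_inP[OF tau P True, of p] unfolding s_def l_def X_def by simp
  next
    case False
    show ?thesis
    proof (cases "j < lo")
      case True then show ?thesis using cnt_low[OF tau P True, of p] False unfolding s_def X_def by simp
    next
      case nl: False
      show ?thesis
      proof (cases "hi < j")
        case True then show ?thesis using cnt_high[OF tau P True lo, of p] False unfolding s_def X_def by simp
      next
        case False
        then show ?thesis using cnt_mid[OF tau P \<open>j \<notin> P\<close> fin, of p] nl \<open>j \<notin> P\<close> unfolding s_def X_def by simp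
      qed
    qed
  qed
  have "(\<Sum>j\<in>{1..n}. cnt s j + (if j\<in>P then gg p lo (p j) else 0)) \<le>
      (\<Sum>j\<in>{1..n}. cnt p j + (if j\<in>P then gg p lo (s j) + l else 0) + (if j \<in> X then card P else 0))"
    by (rule sum_mono) (rule pw)
  moreover have "(\<Sum>j\<in>{1..n}. cnt s j + (if j\<in>P then gg p lo (p j) else 0))
     = inv_count n s + (\<Sum>j\<in>P. gg p lo (p j))"
    using Pn by (simp add: sum.distrib inv_sum sum.inter_restrict[symmetric] Int_absorb1)
  moreover have "(\<Sum>j\<in>{1..n}. cnt p j + (if j\<in>P then gg p lo (s j) + l else 0) + (if j \<in> X then card P else 0))
     = inv_count n p + ((\<Sum>j\<in>P. gg p lo (s j)) + card P * l) + card ({1..n} \<inter> X) * card P"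
    using Pn by (simp only: sum.distrib inv_sum sum_if_const finite_atLeastAtMost sum.inter_restrict[symmetric] Int_absorb1)
         (simp add: Int_absorb1)
  moreover have "(\<Sum>j\<in>P. gg p lo (s j)) = (\<Sum>j\<in>P. gg p lo (p j))"
    unfolding s_def o_def by (rule sum.reindex_bij_betw[where g="\<lambda>j. gg p lo (p j)"]) (rule permutes_imp_bij[OF tau])
  moreover have "card ({1..n} \<inter> X) \<le> l"
  proof -
    have "card ({1..n} \<inter> X) \<le> card {lo..hi}" unfolding X_def by (rule card_mono) auto
    then show ?thesis unfolding l_def by simp
  qed
  ultimately have A: "inv_count n s \<le> inv_count n p + l * card P + card P * card ({1..n} \<inter> X)"
    and B: "card ({1..n} \<inter> X) \<le> l"
    by (simp_all add: mult.commute)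
  have "card P * card ({1..n} \<inter> X) \<le> card P * l" using B by (rule mult_le_mono2)
  with A have "inv_count n s \<le> inv_count n p + card P * l + card P * l"
    by (metis (no_types, lifting) add_le_mono le_refl mult.commute order_trans)
  then show ?thesis unfolding s_def l_def by simp
qed

definition incr :: "nat set \<Rightarrow> (nat \<Rightarrow> nat) \<Rightarrow> bool" where
  "incr P p = (\<forall>x\<in>P. \<forall>y\<in>P. x < y \<longrightarrow> p x < p y)"

lemma rank_eq:
  assumes fin: "finite P" and f: "incr P f" and x: "x \<in> P"
  shows "card {y\<in>P. y < x} = card {v\<in>f ` P. v < f x}"
proof -
  have inj: "inj_on f P" using f unfolding incr_def inj_on_def by (metis linorder_neqE_nat less_irrefl)
  have "f ` {y\<in>P. y < x} = {v\<in>f ` P. v < f x}"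
  proof
    show "f ` {y\<in>P. y < x} \<subseteq> {v\<in>f ` P. v < f x}" using f x unfolding incr_def by auto
    show "{v\<in>f ` P. v < f x} \<subseteq> f ` {y\<in>P. y < x}"
    proof
      fix v assume "v \<in> {v\<in>f ` P. v < f x}"
      then obtain y where y: "y \<in> P" "v = f y" "f y < f x" by auto
      have "y < x" using f x y unfolding incr_def by (metis linorder_neqE_nat less_asym)
      then show "v \<in> f ` {y\<in>P. y < x}" using y by auto
    qed
  qed
  moreover have "inj_on f {y\<in>P. y < x}" using inj by (rule inj_on_subset) auto
  ultimately show ?thesis by (metis card_image)
qed

lemma rank_inj:
  assumes fin: "finite (V::nat set)" and a: "a \<in> V" and b: "b \<in> V"
    and eq: "card {v\<in>V. v < a} = card {v\<in>V. v < b}"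
  shows "a = b"
proof (rule ccontr)
  assume "a \<noteq> b"
  then consider "a < b" | "b < a" by linarith
  then show False
  proof cases
    case 1
    have "{v\<in>V. v < a} \<subset> {v\<in>V. v < b}" using 1 a by auto
    then have "card {v\<in>V. v < a} < card {v\<in>V. v < b}" using fin by (intro psubset_card_mono) auto
    then show False using eq by simp
  next
    case 2
    have "{v\<in>V. v < b} \<subset> {v\<in>V. v < a}" using 2 b by auto
    then have "card {v\<in>V. v < b} < card {v\<in>V. v < a}" using fin by (intro psubset_card_mono) auto
    then show False using eq by simp
  qed
qed

lemma incr_same_image:
  assumes fin: "finite P" and f: "incr P f" and g: "incr P g" and im: "f ` P = g ` P" and x: "x \<in> P"
  shows "f x = g x"
proof -
  have "card {v\<in>f ` P. v < f x} = card {v\<in>f ` P. v < g x}"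
    using rank_eq[OF fin f x] rank_eq[OF fin g x] im by simp
  then show ?thesis using rank_inj[of "f ` P" "f x" "g x"] fin x im by auto
qed

lemma compose_inj:
  assumes p: "p \<in> perms n" and p': "p' \<in> perms n" and ip: "incr P p" and ip': "incr P p'"
    and t: "\<tau> permutes P" and t': "\<tau>' permutes P" and eq: "p \<circ> \<tau> = p' \<circ> \<tau>'" and fin: "finite P"
  shows "p = p' \<and> \<tau> = \<tau>'"
proof -
  have "p ` P = (p \<circ> \<tau>) ` P" using t by (metis image_comp permutes_image)
  also have "\<dots> = p' ` P" using t' eq by (metis image_comp permutes_image)
  finally have im: "p ` P = p' ` P" .
  have same: "p x = p' x" if "x \<in> P" for x using incr_same_image[OF fin ip ip' im that] .
  have injp: "inj p" using p unfolding perms_def by (simp add: permutes_inj)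
  have tt: "\<tau> = \<tau>'"
  proof
    fix x show "\<tau> x = \<tau>' x"
    proof (cases "x \<in> P")
      case True
      have "p (\<tau> x) = p' (\<tau>' x)" using eq by (metis comp_apply)
      also have "\<dots> = p (\<tau>' x)" using same t' True by (simp add: permutes_in_image)
      finally show ?thesis using injp by (simp add: inj_eq)
    next
      case False then show ?thesis using t t' by (simp add: permutes_not_in)
    qed
  qed
  have "p = p'"
  proof
    fix x show "p x = p' x"
    proof (cases "x \<in> P")
      case True then show ?thesis by (rule same)
    next
      case False
      have "p x = p (\<tau> x)" using t False by (simp add: permutes_not_in)
      also have "\<dots> = p' (\<tau>' x)" using eq by (metis comp_apply)
      also have "\<dots> = p' x" using t' False by (simp add: permutes_not_in)
      finally show ?thesis .
    qed
  qed
  with tt show ?thesis by simp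
qed

definition W :: "nat \<Rightarrow> real \<Rightarrow> ((nat \<Rightarrow> nat) \<Rightarrow> bool) \<Rightarrow> real" where
  "W n q E = (\<Sum>p\<in>{p\<in>perms n. E p}. q ^ inv_count n p)"

lemma finite_perms: "finite (perms n)"
  unfolding perms_def by (rule finite_permutations) simp

lemma block_step:
  assumes P: "P \<subseteq> {lo..hi}" and lo: "1 \<le> lo" and hi: "hi \<le> n" and q0: "0 \<le> q" and q1: "q \<le> 1"
    and closed: "\<And>p \<tau>. p \<in> perms n \<Longrightarrow> E p \<Longrightarrow> \<tau> permutes P \<Longrightarrow> E (p \<circ> \<tau>)"
  shows "W n q (\<lambda>p. E p \<and> incr P p) * fact (card P) * q ^ (2 * card P * (hi + 1 - lo)) \<le> W n q E"
proof -
  define D where "D = 2 * card P * (hi + 1 - lo)"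
  define F where "F = {p\<in>perms n. E p \<and> incr P p}"
  define G where "G = {\<tau>. \<tau> permutes P}"
  have fin: "finite P" using P finite_subset by blast
  have Pn: "P \<subseteq> {1..n}" using P lo hi by auto
  have finF: "finite F" unfolding F_def using finite_perms by simp
  have finG: "finite G" unfolding G_def using fin by (rule finite_permutations)
  have cardG: "card G = fact (card P)" unfolding G_def by (rule card_permutations) (auto simp: fin)
  define h where "h = (\<lambda>(p::nat\<Rightarrow>nat, \<tau>::nat\<Rightarrow>nat). p \<circ> \<tau>)"
  have inj: "inj_on h (F \<times> G)"
    unfolding inj_on_def h_def F_def G_def using compose_inj fin by auto
  have sub: "h ` (F \<times> G) \<subseteq> {p\<in>perms n. E p}"
  proof
    fix x assume "x \<in> h ` (F \<times> G)"
    then obtain p \<tau> where x: "x = p \<circ> \<tau>" "p \<in> F" "\<tau> \<in> G" unfolding h_def by auto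
    have "\<tau> permutes {1..n}" using x(3) Pn unfolding G_def by (auto intro: permutes_subset)
    then have "p \<circ> \<tau> \<in> perms n" using x(2) unfolding F_def perms_def by (auto intro: permutes_compose)
    moreover have "E (p \<circ> \<tau>)" using closed x unfolding F_def G_def by auto
    ultimately show "x \<in> {p\<in>perms n. E p}" using x by simp
  qed
  have "(\<Sum>x\<in>F \<times> G. q ^ (inv_count n (fst x) + D)) \<le> (\<Sum>x\<in>F \<times> G. q ^ inv_count n (h x))"
  proof (rule sum_mono)
    fix x assume x: "x \<in> F \<times> G"
    then obtain p \<tau> where "x = (p, \<tau>)" "\<tau> permutes P" unfolding G_def by auto
    then have "inv_count n (h x) \<le> inv_count n (fst x) + D"
      unfolding h_def D_def using inv_bound[OF _ P lo hi] by auto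
    then show "q ^ (inv_count n (fst x) + D) \<le> q ^ inv_count n (h x)"
      using power_decreasing[OF _ q0 q1] by blast
  qed
  also have "\<dots> = (\<Sum>y\<in>h ` (F \<times> G). q ^ inv_count n y)"
    using inj by (simp add: sum.reindex)
  also have "\<dots> \<le> W n q E" unfolding W_def
    using sub finite_perms q0 by (intro sum_mono2) auto
  finally have "(\<Sum>x\<in>F \<times> G. q ^ (inv_count n (fst x) + D)) \<le> W n q E" .
  moreover have "(\<Sum>x\<in>F \<times> G. q ^ (inv_count n (fst x) + D)) = W n q (\<lambda>p. E p \<and> incr P p) * card G * q ^ D"
  proof -
    have "(\<Sum>x\<in>F \<times> G. q ^ (inv_count n (fst x) + D)) = (\<Sum>p\<in>F. \<Sum>\<tau>\<in>G. q ^ (inv_count n p + D))"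
      by (subst sum.cartesian_product) (simp add: split_def)
    also have "\<dots> = (\<Sum>p\<in>F. q ^ inv_count n p) * card G * q ^ D"
      by (simp add: power_add sum_distrib_left sum_distrib_right mult.commute mult.left_commute)
    finally show ?thesis unfolding W_def F_def .
  qed
  ultimately show ?thesis using cardG unfolding D_def by simp
qed

lemma W_nonneg: "0 \<le> q \<Longrightarrow> 0 \<le> W n q E"
  unfolding W_def by (intro sum_nonneg) auto

lemma chain:
  fixes B :: "nat \<Rightarrow> nat set" and lo hi :: "nat \<Rightarrow> nat"
  assumes Bs: "\<And>b. B b \<subseteq> {lo b..hi b}" and los: "\<And>b. 1 \<le> lo b" and his: "\<And>b. hi b \<le> n"
    and len: "\<And>b. hi b + 1 - lo b \<le> K" and disj: "\<And>b c. b \<noteq> c \<Longrightarrow> B b \<inter> B c = {}"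
    and q0: "0 \<le> q" and q1: "q \<le> 1"
  shows "W n q (\<lambda>p. \<forall>b<j. incr (B b) p) * (\<Prod>b<j. fact (card (B b)) * q ^ (2 * card (B b) * K))
         \<le> W n q (\<lambda>p. True)"
proof (induction j)
  case 0
  then show ?case by simp
next
  case (Suc j)
  define E where "E = (\<lambda>p. \<forall>b<j. incr (B b) p)"
  define R where "R = (\<Prod>b<j. fact (card (B b)) * q ^ (2 * card (B b) * K))"
  have R0: "0 \<le> R" unfolding R_def using q0 by (intro prod_nonneg) auto
  have eqE: "(\<lambda>p. \<forall>b<Suc j. incr (B b) p) = (\<lambda>p. E p \<and> incr (B j) p)"
    unfolding E_def by (auto simp: less_Suc_eq)
  have closed: "E (p \<circ> \<tau>)" if "p \<in> perms n" "E p" "\<tau> permutes B j" for p \<tau>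
  proof -
    have "incr (B b) (p \<circ> \<tau>)" if b: "b < j" for b
    proof -
      have "\<tau> x = x" if "x \<in> B b" for x
        using disj[of b j] b that \<open>\<tau> permutes B j\<close> by (auto intro: permutes_not_in)
      then show ?thesis using \<open>E p\<close> b unfolding E_def incr_def by auto
    qed
    then show ?thesis unfolding E_def by auto
  qed
  have step: "W n q (\<lambda>p. E p \<and> incr (B j) p) * fact (card (B j)) * q ^ (2 * card (B j) * (hi j + 1 - lo j)) \<le> W n q E"
    apply (rule block_step[OF Bs los his q0 q1]) using closed by blast
  have "q ^ (2 * card (B j) * K) \<le> q ^ (2 * card (B j) * (hi j + 1 - lo j))"
    by (rule power_decreasing[OF _ q0 q1]) (use len[of j] in simp)
  then have "W n q (\<lambda>p. E p \<and> incr (B j) p) * fact (card (B j)) * q ^ (2 * card (B j) * K) \<le> W n q E"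
    using step W_nonneg[OF q0] by (smt (verit) mult_left_mono fact_ge_zero mult_nonneg_nonneg of_nat_0_le_iff)
  then have "W n q (\<lambda>p. E p \<and> incr (B j) p) * fact (card (B j)) * q ^ (2 * card (B j) * K) * R \<le> W n q E * R"
    using R0 by (rule mult_right_mono)
  also have "W n q E * R \<le> W n q (\<lambda>p. True)" using Suc.IH unfolding E_def R_def .
  finally have X: "W n q (\<lambda>p. E p \<and> incr (B j) p) * fact (card (B j)) * q ^ (2 * card (B j) * K) * R
     \<le> W n q (\<lambda>p. True)" .
  show ?case unfolding eqE using X unfolding R_def prod.lessThan_Suc by (simp only: mult_ac)
qed

lemma multinomial_bound:
  fixes s :: "nat \<Rightarrow> nat" and t :: nat
  shows "fact (\<Sum>b<t. s b) \<le> (\<Prod>b<t. fact (s b)) * t ^ (\<Sum>b<t. s b :: nat)"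
proof (induction t)
  case 0 then show ?case by simp
next
  case (Suc t)
  define S where "S = (\<Sum>b<t. s b)"
  define c where "c = s t"
  have bin: "(S + c choose S) * t ^ S \<le> (t + 1) ^ (S + c)"
  proof -
    have "(S + c choose S) * t ^ S * 1 ^ (S + c - S) \<le> (\<Sum>k\<le>S + c. (S + c choose k) * t ^ k * 1 ^ (S + c - k))"
      by (rule member_le_sum) auto
    also have "\<dots> = (t + 1) ^ (S + c)" unfolding binomial_ring[of t 1 "S+c"] by simp
    finally show ?thesis by simp
  qed
  have "fact (S + c) = (S + c choose S) * fact S * fact c"
    by (metis add_diff_cancel_left' binomial_fact_lemma le_add1 mult.commute mult.left_commute)
  also have "\<dots> \<le> (S + c choose S) * ((\<Prod>b<t. fact (s b)) * t ^ S) * fact c"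
    using Suc.IH unfolding S_def by (intro mult_le_mono) auto
  also have "\<dots> = ((S + c choose S) * t ^ S) * ((\<Prod>b<t. fact (s b)) * fact c)" by simp
  also have "\<dots> \<le> (t + 1) ^ (S + c) * ((\<Prod>b<t. fact (s b)) * fact c)"
    using bin by (rule mult_le_mono1)
  finally show ?case unfolding S_def c_def by (simp add: mult.commute mult.left_commute)
qed

lemma one_plus_pow: "(1 + 1 / real m) ^ m \<le> exp 1"
proof (cases "m = 0")
  case True then show ?thesis by simp
next
  case False
  have "(1 + 1 / real m) ^ m \<le> exp (1 / real m) ^ m"
    by (rule power_mono) (auto simp: exp_ge_add_one_self add.commute)
  also have "\<dots> = exp 1" using False by (simp add: exp_of_nat_mult[symmetric])
  finally show ?thesis .
qed

lemma pow_le_fact: "real m ^ m \<le> exp (real m) * fact m"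
proof (induction m)
  case 0 then show ?case by simp
next
  case (Suc m)
  have a: "real (Suc m) ^ m \<le> exp 1 * real m ^ m"
  proof (cases "m = 0")
    case True then show ?thesis by simp
  next
    case False
    have "real (Suc m) ^ m = real m ^ m * (1 + 1 / real m) ^ m"
      using False by (simp add: power_mult_distrib[symmetric] field_simps)
    also have "\<dots> \<le> real m ^ m * exp 1" by (rule mult_left_mono[OF one_plus_pow]) simp
    finally show ?thesis by (simp add: mult.commute)
  qed
  have "real (Suc m) ^ Suc m = real (Suc m) * real (Suc m) ^ m" by simp
  also have "\<dots> \<le> real (Suc m) * (exp 1 * real m ^ m)" using a by (intro mult_left_mono) auto
  also have "\<dots> \<le> real (Suc m) * (exp 1 * (exp (real m) * fact m))"
    using Suc.IH by (intro mult_left_mono) auto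
  also have "\<dots> = exp (real (Suc m)) * fact (Suc m)"
    by (simp add: exp_add[symmetric] algebra_simps)
  finally show ?case .
qed

lemma q_exp_bound:
  fixes l :: real
  assumes "0 \<le> l" "l \<le> 1/2"
  shows "exp (- (2 * l)) \<le> 1 - l"
proof -
  have "1 + 2 * l \<le> exp (2 * l)" by (rule exp_ge_add_one_self[unfolded add.commute[of _ 1]])
  then have "exp (- (2 * l)) \<le> 1 / (1 + 2 * l)" using assms
    by (simp add: exp_minus field_simps)
  also have "\<dots> \<le> 1 - l"
  proof -
    have "0 \<le> l * (1 - 2 * l)" using assms by (intro mult_nonneg_nonneg) auto
    then have "1 \<le> (1 - l) * (1 + 2 * l)" by (simp add: algebra_simps)
    then show ?thesis using assms by (simp add: divide_le_eq)
  qed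
  finally show ?thesis .
qed



lemma id_perms: "id \<in> perms n" unfolding perms_def by (simp add: permutes_id)

lemma inv_id: "inv_count n id = 0"
proof -
  have "{(i, j). i \<in> {1..n} \<and> j \<in> {1..n} \<and> i < j \<and> id i > id j} = {}" by auto
  then show ?thesis unfolding inv_count_def by (simp only:) simp
qed

lemma Z_eq: "W n q (\<lambda>p. True) = Z_mallows n q" unfolding W_def Z_mallows_def by simp

lemma Z_ge1: assumes "0 \<le> q" shows "1 \<le> Z_mallows n q"
proof -
  have "q ^ inv_count n id \<le> Z_mallows n q" unfolding Z_mallows_def
    using finite_perms assms by (intro member_le_sum[OF id_perms]) auto
  then show ?thesis by (simp add: inv_id)
qed

lemma prob_eq: "mallows_prob n q A = W n q A / Z_mallows n q"
  unfolding mallows_prob_def W_def mallows_def by (simp add: sum_divide_distrib)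

lemma W_mono: assumes "\<And>p. p \<in> perms n \<Longrightarrow> A p \<Longrightarrow> E p" "0 \<le> q"
  shows "W n q A \<le> W n q E"
  unfolding W_def using assms finite_perms by (intro sum_mono2) auto

lemma chain_lt:
  fixes a c m :: nat
  assumes "\<forall>k\<in>{1..m-1}. f (k+1) > (f k :: nat)" "1 \<le> a" "a < c" "c \<le> m"
  shows "f a < f c"
proof -
  have "\<forall>d. a + Suc d \<le> m \<longrightarrow> f a < f (a + Suc d)"
  proof
    fix d show "a + Suc d \<le> m \<longrightarrow> f a < f (a + Suc d)"
    proof (induction d)
      case 0 then show ?case using assms(1,2) by auto
    next
      case (Suc d)
      show ?case
      proof
        assume h: "a + Suc (Suc d) \<le> m"
        have "f (a + Suc d) < f (a + Suc d + 1)" using assms(1,2) h by auto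
        then show "f a < f (a + Suc (Suc d))" using Suc h by simp
      qed
    qed
  qed
  moreover obtain d where d: "c = Suc (a + d)" using less_imp_Suc_add[OF assms(3)] by blast
  moreover have "a + Suc d = c" using d by simp
  ultimately show ?thesis using assms(4) by metis
qed

lemma incr_Pos:
  fixes I :: "nat \<Rightarrow> nat" and m :: nat and p :: "nat \<Rightarrow> nat"
  assumes sm: "strict_mono_on {1..m} I" and A: "\<forall>k\<in>{1..m-1}. p (I (k+1)) > p (I k)"
  shows "incr (I ` {1..m}) p"
  unfolding incr_def
proof (intro ballI impI)
  fix x y assume x: "x \<in> I ` {1..m}" and y: "y \<in> I ` {1..m}" and xy: "x < y"
  then obtain a c where ac: "a \<in> {1..m}" "c \<in> {1..m}" "x = I a" "y = I c" by auto
  have "a < c"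
  proof (rule ccontr)
    assume "\<not> a < c"
    then have "c = a \<or> c < a" by linarith
    then have "I c \<le> I a" using sm ac unfolding strict_mono_on_def by (auto simp: less_imp_le)
    then show False using xy ac by simp
  qed
  have "\<forall>k\<in>{1..m-1}. (p \<circ> I) (k+1) > (p \<circ> I) k" using A by simp
  from chain_lt[OF this, of a c] \<open>a < c\<close> ac have "(p \<circ> I) a < (p \<circ> I) c" by simp
  then show "p x < p y" using ac by simp
qed



lemma incr_subset: "incr P p \<Longrightarrow> Q \<subseteq> P \<Longrightarrow> incr Q p"
  unfolding incr_def by blast

lemma main_case:
  fixes n m :: nat and q :: real and I :: "nat \<Rightarrow> nat"
  assumes q0: "0 < q" and qn: "q \<le> 1 - 2 / real n" and qh: "1/2 < q"
    and m1: "1 \<le> m" and mn: "m \<le> n" and sm: "strict_mono_on {1..m} I" and Ir: "I ` {1..m} \<subseteq> {1..n}"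
  shows "mallows_prob n q (\<lambda>p. \<forall>k\<in>{1..m-1}. p (I (k+1)) > p (I k))
          \<le> (3 * exp 5 * real n * (1 - q) / real m) ^ m"
proof -
  define A where "A = (\<lambda>p::nat\<Rightarrow>nat. \<forall>k\<in>{1..m-1}. p (I (k+1)) > p (I k))"
  define l where "l = 1 - q"
  have n0: "0 < n" using m1 mn by simp
  have "0 < 2 / real n" using n0 by simp
  then have l0: "0 < l" and lh: "l < 1/2" and q1: "q \<le> 1" using qn qh unfolding l_def by linarith+
  have nl: "2 \<le> real n * l" using qn n0 unfolding l_def by (simp add: field_simps)
  define K where "K = nat \<lfloor>1 / l\<rfloor>"
  have il: "2 < 1 / l" using l0 lh by (simp add: field_simps)
  have fl: "2 \<le> \<lfloor>1 / l\<rfloor>" using il by (simp add: le_floor_iff)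
  have Kr: "real K = of_int \<lfloor>1 / l\<rfloor>" unfolding K_def by (rule of_nat_nat) (use fl in linarith)
  have K1: "1 \<le> K" unfolding K_def using fl by linarith
  have Kl: "real K * l \<le> 1" using Kr l0 by (metis of_int_floor_le pos_le_divide_eq mult.commute)
  have Kl2: "1 / (2 * l) \<le> real K"
  proof -
    have "1 / l - 1 < real K" using Kr by linarith
    moreover have "1 / (2 * l) \<le> 1 / l - 1" using l0 lh by (simp add: field_simps)
    ultimately show ?thesis by linarith
  qed
  define Pos where "Pos = I ` {1..m}"
  define B where "B = (\<lambda>b. {x\<in>Pos. (x - 1) div K = b})"
  define lo where "lo = (\<lambda>b. b * K + 1)"
  define hi where "hi = (\<lambda>b. min n (b * K + K))"
  define t where "t = (n - 1) div K + 1"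
  have Bs: "B b \<subseteq> {lo b..hi b}" for b
  proof
    fix x assume x: "x \<in> B b"
    then have xn: "1 \<le> x" "x \<le> n" and xd: "(x - 1) div K = b" using Ir unfolding B_def Pos_def by auto
    have e: "b * K + (x - 1) mod K = x - 1" using div_mult_mod_eq[of "x - 1" K] xd by metis
    have md: "(x - 1) mod K < K" using K1 by simp
    have "b * K + 1 \<le> x" using e xn by linarith
    moreover have "x \<le> b * K + K" using e md xn by linarith
    ultimately show "x \<in> {lo b..hi b}" using xn unfolding lo_def hi_def by auto
  qed
  have los: "1 \<le> lo b" for b unfolding lo_def by simp
  have his: "hi b \<le> n" for b unfolding hi_def by simp
  have len: "hi b + 1 - lo b \<le> K" for b unfolding hi_def lo_def by simp
  have disj: "b \<noteq> c \<Longrightarrow> B b \<inter> B c = {}" for b c unfolding B_def by auto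
  have ch: "W n q (\<lambda>p. \<forall>b<t. incr (B b) p) * (\<Prod>b<t. fact (card (B b)) * q ^ (2 * card (B b) * K))
         \<le> W n q (\<lambda>p. True)"
    by (rule chain[OF Bs los his len disj]) (use q0 q1 in auto)
  have WA: "W n q A \<le> W n q (\<lambda>p. \<forall>b<t. incr (B b) p)"
  proof (rule W_mono)
    fix p assume "A p"
    then have "incr Pos p" unfolding A_def Pos_def using incr_Pos[OF sm] by blast
    then show "\<forall>b<t. incr (B b) p" unfolding B_def by (auto intro: incr_subset)
  qed (use q0 in auto)
  have cardPos: "card Pos = m" unfolding Pos_def
    using card_image[OF strict_mono_on_imp_inj_on[OF sm]] by simp
  have UB: "Pos = (\<Union>b\<in>{..<t}. B b)"
  proof
    show "Pos \<subseteq> (\<Union>b\<in>{..<t}. B b)"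
    proof
      fix x assume x: "x \<in> Pos"
      then have "x \<le> n" using Ir unfolding Pos_def by auto
      then have "(x - 1) div K \<le> (n - 1) div K" by (intro div_le_mono) simp
      then show "x \<in> (\<Union>b\<in>{..<t}. B b)" using x unfolding B_def t_def by auto
    qed
    show "(\<Union>b\<in>{..<t}. B b) \<subseteq> Pos" unfolding B_def by auto
  qed
  have finPos: "finite Pos" unfolding Pos_def by simp
  have sumB: "(\<Sum>b<t. card (B b)) = m"
  proof -
    have "card (\<Union>b\<in>{..<t}. B b) = (\<Sum>b<t. card (B b))"
      by (rule card_UN_disjoint) (use disj finPos in \<open>auto simp: B_def\<close>)
    then show ?thesis using UB cardPos by simp
  qed
  define FP where "FP = (\<Prod>b<t. fact (card (B b)) :: real)"
  have prodeq: "(\<Prod>b<t. fact (card (B b)) * q ^ (2 * card (B b) * K)) = FP * q ^ (2 * K * m)"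
  proof -
    have "(\<Prod>b<t. q ^ (2 * card (B b) * K)) = q ^ (\<Sum>b<t. 2 * card (B b) * K)"
      by (simp add: power_sum)
    also have "(\<Sum>b<t. 2 * card (B b) * K) = 2 * K * m"
      using sumB by (simp add: sum_distrib_right[symmetric] sum_distrib_left[symmetric] mult.commute mult.left_commute)
    finally show ?thesis unfolding FP_def by (simp add: prod.distrib)
  qed
  have multi: "fact m \<le> FP * real t ^ m"
  proof -
    have "fact (\<Sum>b<t. card (B b)) \<le> (\<Prod>b<t. fact (card (B b))) * t ^ (\<Sum>b<t. card (B b))"
      by (rule multinomial_bound)
    then have "(fact m :: nat) \<le> (\<Prod>b<t. fact (card (B b))) * t ^ m" using sumB by simp
    then have "real (fact m :: nat) \<le> real ((\<Prod>b<t. fact (card (B b))) * t ^ m)" by (rule of_nat_mono)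
    then show ?thesis unfolding FP_def by (simp add: of_nat_prod)
  qed
  have Z1: "1 \<le> Z_mallows n q" using Z_ge1 q0 by simp
  have t1: "1 \<le> t" unfolding t_def by simp
  have FP0: "0 < FP" unfolding FP_def by (intro prod_pos) auto
  have qe: "exp (- (2 * l)) \<le> q" using q_exp_bound[of l] l0 lh unfolding l_def by simp
  have Q: "exp (-4) \<le> q ^ (2 * K)"
  proof -
    have "exp (-4) \<le> exp (real (2 * K) * (- (2 * l)))" using Kl by simp
    also have "\<dots> = exp (- (2 * l)) ^ (2 * K)" by (rule exp_of_nat_mult)
    also have "\<dots> \<le> q ^ (2 * K)" by (rule power_mono[OF qe]) simp
    finally show ?thesis .
  qed
  have QM: "exp (-4) ^ m \<le> q ^ (2 * K * m)"
  proof -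
    have "exp (-4) ^ m \<le> (q ^ (2 * K)) ^ m" by (rule power_mono[OF Q]) simp
    then show ?thesis by (simp only: power_mult)
  qed
  have fm: "real m ^ m / exp (real m) \<le> fact m"
    using pow_le_fact[of m] by (simp add: divide_le_eq mult.commute)
  have tm0: "0 < real t ^ m" using t1 by simp
  have FPl: "real m ^ m / exp (real m) / real t ^ m \<le> FP"
  proof -
    have h: "real m ^ m / exp (real m) \<le> FP * real t ^ m" using fm multi by linarith
    show ?thesis by (rule pos_divide_le_eq[OF tm0, THEN iffD2]) (rule h)
  qed
  define X where "X = FP * q ^ (2 * K * m)"
  have Xl: "(real m ^ m / exp (real m) / real t ^ m) * exp (-4) ^ m \<le> X"
    unfolding X_def by (rule mult_mono[OF FPl QM]) (use FP0 in auto)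
  have e1: "exp (-4::real) ^ m = exp (real m) / exp 5 ^ m"
  proof -
    have "exp (-4::real) ^ m = exp (real m * (-4))" by (rule exp_of_nat_mult[symmetric])
    also have "\<dots> = exp (real m - real m * 5)" by (simp add: algebra_simps)
    also have "\<dots> = exp (real m) / exp (real m * 5)" by (rule exp_diff)
    also have "exp (real m * 5) = exp 5 ^ m" by (rule exp_of_nat_mult)
    finally show ?thesis .
  qed
  have Xl2: "(real m / (exp 5 * real t)) ^ m \<le> X"
  proof -
    have "(real m ^ m / exp (real m) / real t ^ m) * exp (-4) ^ m = (real m / (exp 5 * real t)) ^ m"
      unfolding e1 by (simp add: power_divide power_mult_distrib field_simps)
    then show ?thesis using Xl by simp
  qed
  have m0: "0 < real m" using m1 by simp
  have Xpos: "0 < (real m / (exp 5 * real t)) ^ m" using m0 t1 by simp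
  have WE: "W n q (\<lambda>p. \<forall>b<t. incr (B b) p) * X \<le> Z_mallows n q"
    using ch unfolding prodeq X_def Z_eq by simp
  have "mallows_prob n q A = W n q A / Z_mallows n q" by (rule prob_eq)
  also have "\<dots> \<le> W n q (\<lambda>p. \<forall>b<t. incr (B b) p) / Z_mallows n q"
    using WA Z1 by (simp add: divide_right_mono)
  also have "\<dots> \<le> 1 / X"
  proof -
    have X0: "0 < X" using Xpos Xl2 by linarith
    show ?thesis using WE X0 Z1 by (simp add: field_simps)
  qed
  also have "\<dots> \<le> 1 / (real m / (exp 5 * real t)) ^ m"
    using Xl2 Xpos by (simp add: frac_le)
  also have "\<dots> = (exp 5 * real t / real m) ^ m" by (simp add: power_divide)
  also have "\<dots> \<le> (3 * exp 5 * real n * (1 - q) / real m) ^ m"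
  proof (rule power_mono)
    have "real ((n - 1) div K) * real K \<le> real (n - 1)"
    proof -
      have "(n - 1) div K * K \<le> n - 1" by (metis div_mult_mod_eq le_add1)
      then show ?thesis by (metis of_nat_le_iff of_nat_mult)
    qed
    then have "real ((n - 1) div K) \<le> real n / real K" using K1
      by (simp add: le_divide_eq)
    also have "\<dots> \<le> real n * (2 * l)"
    proof -
      have "1 / real K \<le> 2 * l" using Kl2 l0 K1 by (simp add: field_simps)
      then have "real n * (1 / real K) \<le> real n * (2 * l)" by (rule mult_left_mono) simp
      then show ?thesis by simp
    qed
    finally have "real t \<le> real n * (2 * l) + 1" unfolding t_def by simp
    then have "real t \<le> 3 * real n * l" using nl by linarith
    then show "exp 5 * real t / real m \<le> 3 * exp 5 * real n * (1 - q) / real m"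
      using m0 unfolding l_def by (simp add: divide_right_mono)
    show "0 \<le> exp 5 * real t / real m" by simp
  qed
  finally show ?thesis unfolding A_def .
qed

theorem proposition4p4:
  "\<exists>C::real. C > 0 \<and>
     (\<forall>(n::nat) (q::real) (m::nat) (I::nat \<Rightarrow> nat).
        n \<ge> 1 \<longrightarrow> 0 < q \<longrightarrow> q \<le> 1 - 2 / real n \<longrightarrow>
        1 \<le> m \<longrightarrow> m \<le> n \<longrightarrow>
        strict_mono_on {1..m} I \<longrightarrow> I ` {1..m} \<subseteq> {1..n} \<longrightarrow>
        mallows_prob n q (\<lambda>p. \<forall>k\<in>{1..m-1}. p (I (k+1)) > p (I k))
          \<le> (C * real n * (1 - q) / real m) ^ m)"
proof (rule exI[of _ "3 * exp 5"], intro conjI allI impI)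
  show "0 < 3 * exp (5::real)" by simp
  fix n m :: nat and q :: real and I :: "nat \<Rightarrow> nat"
  assume n1: "n \<ge> 1" and q0: "0 < q" and qn: "q \<le> 1 - 2 / real n" and m1: "1 \<le> m" and mn: "m \<le> n"
    and sm: "strict_mono_on {1..m} I" and Ir: "I ` {1..m} \<subseteq> {1..n}"
  show "mallows_prob n q (\<lambda>p. \<forall>k\<in>{1..m-1}. p (I (k+1)) > p (I k))
          \<le> (3 * exp 5 * real n * (1 - q) / real m) ^ m"
  proof (cases "1/2 < q")
    case True
    then show ?thesis using main_case[OF q0 qn True m1 mn sm Ir] by simp
  next
    case False
    have "mallows_prob n q (\<lambda>p. \<forall>k\<in>{1..m-1}. p (I (k+1)) > p (I k)) \<le> 1"
    proof -
      have "W n q (\<lambda>p. \<forall>k\<in>{1..m-1}. p (I (k+1)) > p (I k)) \<le> W n q (\<lambda>p. True)"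
        by (rule W_mono) (use q0 in auto)
      then show ?thesis using Z_ge1[of q n] q0 unfolding prob_eq Z_eq by simp
    qed
    also have "1 \<le> (3 * exp 5 * real n * (1 - q) / real m) ^ m"
    proof (rule one_le_power)
      have m0: "0 < real m" using m1 by simp
      have "real m \<le> real n" using mn by simp
      moreover have "1 \<le> 3 * exp (5::real) * (1 - q)"
      proof -
        have "1 \<le> exp (5::real)" by simp
        moreover have "1/2 \<le> 1 - q" using False by linarith
        ultimately have "3 * 1 * (1/2) \<le> 3 * exp (5::real) * (1 - q)" by (intro mult_mono) auto
        then show ?thesis by linarith
      qed
      ultimately have "real m \<le> 3 * exp 5 * real n * (1 - q)"
        by (smt (verit, best) m0 mult.commute mult.left_commute mult_le_cancel_left1 mult_mono)
      then show "1 \<le> 3 * exp 5 * real n * (1 - q) / real m" using m0 by (simp add: le_divide_eq)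
    qed
    finally show ?thesis .
  qed
qed


end
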